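(* Let $x_1 \geq x_2 \geq \dots \geq x_m$ be the side lengths of a finite set of squares with $x_1 < \frac{1}{2}$. If the total area $\sum_i x_i^2$ is at most $\frac{1}{2} + 2\left(x_1 - \frac{1}{2}\right)^2$, then \textsc{Shelf Packing} packs all of these squares into a unit square.
   Context: \textsc{Shelf Packing} (of Moon and Moser) into an axis-parallel rectangular container processes the squares in order of non-increasing side length and places them axis-parallel. The container is filled by horizontal "shelves" stacked from the bottom upward. A shelf is opened by the first square placed in it, whose side length determines the shelf's height; the shelf's bottom is the top of the previous shelf (or the container's bottom for the first shelf). Subsequent squares are placed next to each other along the bottom of the current shelf, from left to right. When the next square no longer fits into the remaining width of the current shelf, a new shelf is opened on top of the current one, starting with that square. \textsc{Shelf Packing} succeeds if all squares are placed inside the container, and fails if some square would have to be placed in a shelf exceeding the container's height. *)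

theory Defs
  imports Main "HOL.Real"
begin

text \<open>Shelf Packing (Moon and Moser) into a container of width W and height H,
  placed with lower-left corner at the origin. The squares are given as a list of
  side lengths, in the order they are processed (non-increasing).
  The result is the list of lower-left corners of the placed squares.
  The auxiliary state is (current x-position in the shelf, shelf bottom, shelf height).\<close>

fun shelf_aux :: "real \<Rightarrow> real \<times> real \<times> real \<Rightarrow> real list \<Rightarrow> (real \<times> real) list" where
  "shelf_aux W st [] = []"
| "shelf_aux W (cx, b, h) (s # ss) =
     (if cx + s \<le> W
      then (cx, b) # shelf_aux W (cx + s, b, h) ss
      else (0, b + h) # shelf_aux W (s, b + h, s) ss)"

fun shelf_positions :: "real \<Rightarrow> real list \<Rightarrow> (real \<times> real) list" where
  "shelf_positions W [] = []"
| "shelf_positions W (s # ss) = (0, 0) # shelf_aux W (s, 0, s) ss"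

definition shelf_packing_succeeds :: "real \<Rightarrow> real \<Rightarrow> real list \<Rightarrow> bool" where
  "shelf_packing_succeeds W H xs \<longleftrightarrow>
     (\<forall>i < length xs.
        fst (shelf_positions W xs ! i) + xs ! i \<le> W \<and>
        snd (shelf_positions W xs ! i) + xs ! i \<le> H)"

end

theory Submission
  imports Defs
begin

lemma width_aux:
  assumes "\<forall>x\<in>set ss. x \<le> 1" "i < length ss"
  shows "fst (shelf_aux 1 st ss ! i) + ss ! i \<le> 1"
  using assms
proof (induction ss arbitrary: st i)
  case Nil then show ?case by simp
next
  case (Cons s ss)
  obtain cx b h where st: "st = (cx, b, h)" by (cases st) auto
  show ?case
  proof (cases i)
    case 0 then show ?thesis using Cons.prems st by auto
  next
    case (Suc j)
    then show ?thesis using Cons.prems Cons.IH st by auto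
  qed
qed

lemma sumsq_nonneg: "0 \<le> (\<Sum>x\<leftarrow>ss. (x::real)^2)"
  by (induction ss) auto

lemma height_aux:
  assumes "sorted_wrt (\<ge>) ss" "\<forall>x\<in>set ss. x \<le> l" "\<forall>x\<in>set ss. 0 \<le> x"
    and "h \<le> cx" "h \<le> h1" "h1 < 1" "l \<le> h" "0 \<le> l"
    and "A \<ge> h1^2 + (1-h1)*(b+h-h1) + (cx-h)*l"
    and "i < length ss" "snd (shelf_aux 1 (cx,b,h) ss ! i) + ss!i > 1"
  shows "A + (\<Sum>x\<leftarrow>ss. x^2) > h1^2 + (1-h1)^2"
  using assms
proof (induction ss arbitrary: cx b h A l i)
  case Nil then show ?case by simp
next
  case (Cons s ss)
  note P = Cons.prems
  have sl: "s \<le> l" using P(2) by simp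
  have s0: "0 \<le> s" using P(3) by simp
  have srt: "sorted_wrt (\<ge>) ss" using P(1) by simp
  have les: "\<forall>x\<in>set ss. x \<le> s" using P(1) by simp
  have pos: "\<forall>x\<in>set ss. 0 \<le> x" using P(3) by simp
  have rest: "0 \<le> (\<Sum>x\<leftarrow>ss. x^2)" by (rule sumsq_nonneg)
  have h1pos: "0 < 1 - h1" using P(6) by simp
  have m1: "(cx-h)*s \<le> (cx-h)*l" using P(4) sl by (intro mult_left_mono) auto
  have cl0: "(cx-h)*l \<ge> 0" using P(4) P(8) by simp
  have ss0: "0 \<le> s*s" by simp
  have sq: "s^2 = s*s" "h1^2 = h1*h1" "(1-h1)^2 = (1-h1)*(1-h1)" by (simp_all add: power2_eq_square)
  have sumc: "(\<Sum>x\<leftarrow>s#ss. x^2) = s^2 + (\<Sum>x\<leftarrow>ss. x^2)" by simp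
  show ?case
  proof (cases "cx + s \<le> 1")
    case True
    have e1: "(cx+s-h)*s = (cx-h)*s + s*s" by (simp add: algebra_simps)
    have inv: "A + s^2 \<ge> h1^2 + (1-h1)*(b+h-h1) + (cx+s-h)*s"
      using P(9) m1 e1 sq by linarith
    have sa: "shelf_aux 1 (cx,b,h) (s#ss) = (cx,b) # shelf_aux 1 (cx+s,b,h) ss"
      using True by simp
    show ?thesis
    proof (cases i)
      case 0
      then have "b + s > 1" using P(11) sa by simp
      then have bh: "b + h > 1" using sl P(7) by linarith
      have "(1-h1)*(1-h1) < (1-h1)*(b+h-h1)" using bh h1pos by (intro mult_strict_left_mono) auto
      then show ?thesis using P(9) rest ss0 cl0 sq sumc by linarith
    next
      case (Suc j)
      have j: "j < length ss" using P(10) Suc by simp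
      have gt: "snd (shelf_aux 1 (cx+s,b,h) ss ! j) + ss!j > 1" using P(11) sa Suc by simp
      have "A + s^2 + (\<Sum>x\<leftarrow>ss. x^2) > h1^2 + (1-h1)^2"
        using Cons.IH[OF srt les pos _ P(5) P(6) _ s0 inv j gt] P(4) sl P(7) s0 by linarith
      then show ?thesis using sumc by linarith
    qed
  next
    case False
    have sa: "shelf_aux 1 (cx,b,h) (s#ss) = (0,b+h) # shelf_aux 1 (s,b+h,s) ss"
      using False by simp
    have f1: "(1-s-h)*s \<le> (cx-h)*s" using False s0 by (intro mult_right_mono) auto
    have f2: "h*s \<le> h1*s" using P(5) s0 by (intro mult_right_mono) auto
    have f3: "(1-s-h)*s = s - s*s - h*s" by (simp add: algebra_simps)
    have f4: "(1-h1)*((b+h)+s-h1) = (1-h1)*(b+h-h1) + s - h1*s" by (simp add: algebra_simps)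
    have c1: "(cx-h)*s \<ge> s - s*s - h1*s" using f1 f2 f3 by linarith
    have c2: "A \<ge> h1^2 + (1-h1)*(b+h-h1) + (cx-h)*s" using P(9) m1 by linarith
    have inv0: "A + s^2 \<ge> h1^2 + (1-h1)*((b+h)+s-h1)"
      using c1 c2 f4 sq(1) by linarith
    then have inv: "A + s^2 \<ge> h1^2 + (1-h1)*((b+h)+s-h1) + (s-s)*s" by simp
    show ?thesis
    proof (cases i)
      case 0
      then have bh: "b + h + s > 1" using P(11) sa by simp
      have "(1-h1)*(1-h1) < (1-h1)*(b+h+s-h1)" using bh h1pos by (intro mult_strict_left_mono) auto
      then show ?thesis using inv rest sq sumc by simp
    next
      case (Suc j)
      have j: "j < length ss" using P(10) Suc by simp
      have gt: "snd (shelf_aux 1 (s,b+h,s) ss ! j) + ss!j > 1" using P(11) sa Suc by simp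
      have "A + s^2 + (\<Sum>x\<leftarrow>ss. x^2) > h1^2 + (1-h1)^2"
        using Cons.IH[OF srt les pos _ _ P(6) _ s0 inv j gt] P(5) P(7) sl by linarith
      then show ?thesis using sumc by linarith
    qed
  qed
qed

theorem lemma4:
  fixes xs :: "real list"
  assumes "xs \<noteq> []"
    and "sorted_wrt (\<ge>) xs"
    and "\<forall>x \<in> set xs. x > 0"
    and "hd xs < 1/2"
    and "(\<Sum>x\<leftarrow>xs. x^2) \<le> 1/2 + 2 * (hd xs - 1/2)^2"
  shows "shelf_packing_succeeds 1 1 xs"
proof -
  obtain x1 ss where xs: "xs = x1 # ss" using assms(1) list.exhaust by metis
  have x1: "0 < x1" "x1 < 1/2" using assms(3,4) xs by simp_all
  have le: "\<forall>x\<in>set ss. x \<le> x1" using assms(2) xs by simp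
  have pos: "\<forall>x\<in>set ss. 0 \<le> x" using assms(3) xs by (simp add: less_imp_le)
  have srt: "sorted_wrt (\<ge>) ss" using assms(2) xs by simp
  have sum: "x1^2 + (\<Sum>x\<leftarrow>ss. x^2) \<le> x1^2 + (1-x1)^2"
  proof -
    have e: "1/2 + 2 * (x1 - 1/2)^2 = x1^2 + (1-x1)^2" by (simp add: power2_eq_square field_simps)
    have "(\<Sum>x\<leftarrow>xs. x^2) = x1^2 + (\<Sum>x\<leftarrow>ss. x^2)" using xs by simp
    moreover have "hd xs = x1" using xs by simp
    ultimately show ?thesis using assms(5) e by simp
  qed
  show ?thesis unfolding shelf_packing_succeeds_def
  proof (intro allI impI)
    fix i assume i: "i < length xs"
    show "fst (shelf_positions 1 xs ! i) + xs ! i \<le> 1 \<and> snd (shelf_positions 1 xs ! i) + xs ! i \<le> 1"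
    proof (cases i)
      case 0 then show ?thesis using xs x1 by simp
    next
      case (Suc j)
      have j: "j < length ss" using i Suc xs by simp
      have w: "fst (shelf_aux 1 (x1,0,x1) ss ! j) + ss ! j \<le> 1"
        using width_aux[OF _ j] le x1 by force
      have "\<not> snd (shelf_aux 1 (x1,0,x1) ss ! j) + ss ! j > 1"
      proof
        assume gt: "snd (shelf_aux 1 (x1,0,x1) ss ! j) + ss ! j > 1"
        have "x1^2 + (1-x1)^2 < x1^2 + (\<Sum>x\<leftarrow>ss. x^2)"
          by (rule height_aux[OF srt le pos _ _ _ _ _ _ j gt]) (use x1 in auto)
        then have "x1^2 + (\<Sum>x\<leftarrow>ss. x^2) > x1^2 + (1-x1)^2" by simp
        then show False using sum by simp
      qed
      then show ?thesis using w xs Suc by simp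
    qed
  qed
qed

end
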